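(* Let $\mathsf Y=\mathsf Y_1\times\cdots\times\mathsf Y_L$ be a product of Euclidean spaces and let $S:\mathsf Y\to\mathsf Y$ be a firmly non-expansive operator with domain $\mathsf Y$, written $S(\zeta)=(S_1(\zeta),\dots,S_L(\zeta))$ with $S_\ell(\zeta)\in\mathsf Y_\ell$. For $\ell=1,\dots,L$ define $\hat S_\ell:\mathsf Y\to\mathsf Y$ by $$\hat S_\ell(\zeta)=(\zeta_1,\dots,\zeta_{\ell-1},S_\ell(\zeta),\zeta_{\ell+1},\dots,\zeta_L).$$ Let $(\xi^k)_{k\ge1}$ be i.i.d. random variables on a probability space, valued in $\{1,\dots,L\}$, with $\mathbb P[\xi^1=\ell]=p_\ell>0$ for all $\ell$. Assume the fixed point set $\mathrm{fix}(S)$ is nonempty. Then for any initial value $\zeta^0\in\mathsf Y$, the sequence $\zeta^{k+1}=\hat S_{\xi^{k+1}}(\zeta^k)$ converges almost surely to a random variable taking values in $\mathrm{fix}(S)$.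
   Context: An operator $S$ on a Euclidean space $\mathsf Y$ is firmly non-expansive if $\langle x-x',S(x)-S(x')\rangle\ge\|S(x)-S(x')\|^2$ for all $x,x'$ (in particular it is single valued). $\mathrm{fix}(S)=\{\zeta:S(\zeta)=\zeta\}$. *)

theory Defs
  imports "HOL-Analysis.Analysis" "HOL-Probability.Probability"
begin

text \<open>The product space Y = Y_1 x ... x Y_L: blocks are indexed by a finite type 'i
  (L = CARD('i)); block l is the Euclidean space Y_l, modelled as a linear subspace
  V l of a Euclidean space 'a.  Elements of Y are vectors z :: 'a^'i with z$l in V l;
  the inner product on 'a^'i is the sum of the blockwise inner products.\<close>

definition prod_space :: "('i::finite \<Rightarrow> ('a::euclidean_space) set) \<Rightarrow> ('a^'i) set" where
  "prod_space V = {z. \<forall>l. z $ l \<in> V l}"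

definition firmly_nonexpansive_on :: "'b::real_inner set \<Rightarrow> ('b \<Rightarrow> 'b) \<Rightarrow> bool" where
  "firmly_nonexpansive_on Y S \<longleftrightarrow>
     (\<forall>x\<in>Y. \<forall>x'\<in>Y. inner (x - x') (S x - S x') \<ge> (norm (S x - S x'))\<^sup>2)"

definition fixset :: "'b set \<Rightarrow> ('b \<Rightarrow> 'b) \<Rightarrow> 'b set" where
  "fixset Y S = {z\<in>Y. S z = z}"

definition S_hat :: "('a^'i \<Rightarrow> 'a^'i) \<Rightarrow> 'i::finite \<Rightarrow> 'a^'i \<Rightarrow> 'a^'i" where
  "S_hat S l z = (\<chi> j. if j = l then S z $ l else z $ j)"

primrec rbc_iter :: "('a^'i \<Rightarrow> 'a^'i) \<Rightarrow> (nat \<Rightarrow> 'm \<Rightarrow> 'i::finite) \<Rightarrow> 'a^'i \<Rightarrow> nat \<Rightarrow> 'm \<Rightarrow> 'a^'i" where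
  "rbc_iter S xi z0 0 w = z0"
| "rbc_iter S xi z0 (Suc k) w = S_hat S (xi (Suc k) w) (rbc_iter S xi z0 k w)"

end

theory Submission
  imports Defs
begin


fun upA :: "(nat \<Rightarrow> real) \<Rightarrow> real \<Rightarrow> real \<Rightarrow> nat \<Rightarrow> nat \<Rightarrow> nat \<Rightarrow> bool" where
  "upA x a b 0 n N = True"
| "upA x a b (Suc j) n N = (\<exists>k. n \<le> k \<and> k \<le> N \<and> x k \<le> a \<and> (\<exists>k'. k \<le> k' \<and> k' \<le> N \<and> b \<le> x k' \<and> upA x a b j k' N))"

lemma upA_anti: "upA x a b j n N \<Longrightarrow> n' \<le> n \<Longrightarrow> upA x a b j n' N"
  by (cases j) (auto, meson order_trans)

lemma upA_mono_N: "upA x a b j n N \<Longrightarrow> N \<le> N' \<Longrightarrow> upA x a b j n N'"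
  by (induction j arbitrary: n) (auto, meson order_trans)

lemma upA_cong:
  assumes "\<And>k. k \<le> N \<Longrightarrow> x k = y k"
  shows "upA x a b j n N = upA y a b j n N"
proof (induction j arbitrary: n)
  case 0 then show ?case by simp
next
  case (Suc j)
  have "(\<exists>k. n \<le> k \<and> k \<le> N \<and> x k \<le> a \<and> (\<exists>k'. k \<le> k' \<and> k' \<le> N \<and> b \<le> x k' \<and> upA y a b j k' N))
    = (\<exists>k. n \<le> k \<and> k \<le> N \<and> y k \<le> a \<and> (\<exists>k'. k \<le> k' \<and> k' \<le> N \<and> b \<le> y k' \<and> upA y a b j k' N))"
  proof
    assume "\<exists>k. n \<le> k \<and> k \<le> N \<and> x k \<le> a \<and> (\<exists>k'. k \<le> k' \<and> k' \<le> N \<and> b \<le> x k' \<and> upA y a b j k' N)"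
    then obtain k k' where "n \<le> k" "k \<le> N" "x k \<le> a" "k \<le> k'" "k' \<le> N" "b \<le> x k'" "upA y a b j k' N" by blast
    then show "\<exists>k. n \<le> k \<and> k \<le> N \<and> y k \<le> a \<and> (\<exists>k'. k \<le> k' \<and> k' \<le> N \<and> b \<le> y k' \<and> upA y a b j k' N)"
      using assms[of k] assms[of k'] by (intro exI[of _ k]) (auto intro!: exI[of _ k'])
  next
    assume "\<exists>k. n \<le> k \<and> k \<le> N \<and> y k \<le> a \<and> (\<exists>k'. k \<le> k' \<and> k' \<le> N \<and> b \<le> y k' \<and> upA y a b j k' N)"
    then obtain k k' where "n \<le> k" "k \<le> N" "y k \<le> a" "k \<le> k'" "k' \<le> N" "b \<le> y k'" "upA y a b j k' N" by blast
    then show "\<exists>k. n \<le> k \<and> k \<le> N \<and> x k \<le> a \<and> (\<exists>k'. k \<le> k' \<and> k' \<le> N \<and> b \<le> x k' \<and> upA y a b j k' N)"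
      using assms[of k] assms[of k'] by (intro exI[of _ k]) (auto intro!: exI[of _ k'])
  qed
  then show ?case by (simp add: Suc.IH)
qed

lemma upA_freq:
  assumes lo: "\<And>M. \<exists>n\<ge>M. x n \<le> a" and hi: "\<And>M. \<exists>n\<ge>M. b \<le> x n"
  shows "\<exists>N. upA x a b j n N"
proof (induction j arbitrary: n)
  case 0 then show ?case by simp
next
  case (Suc j)
  obtain k where k: "k \<ge> n" "x k \<le> a" using lo by blast
  obtain k' where k': "k' \<ge> k" "b \<le> x k'" using hi by blast
  obtain N where N: "upA x a b j k' N" using Suc by blast
  have "upA x a b j k' (max N k')" using upA_mono_N[OF N] by simp
  moreover have "k \<le> max N k'" "k' \<le> max N k'" using k' by auto
  ultimately have "upA x a b (Suc j) n (max N k')" using k k' by (simp only: upA.simps) blast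
  then show ?case by blast
qed

lemma conv_det:
  fixes x :: "nat \<Rightarrow> real"
  assumes x0: "\<And>k. 0 \<le> x k" and B: "\<And>k. x k \<le> B"
    and noup: "\<And>a b::rat. 0 \<le> a \<Longrightarrow> a < b \<Longrightarrow> \<not> (\<forall>j. \<exists>N. upA x (of_rat a) (of_rat b) j 0 N)"
  shows "convergent x"
proof (rule ccontr)
  assume nc: "\<not> convergent x"
  have li: "0 \<le> liminf x" using x0 by (intro Liminf_bounded) auto
  have ls: "limsup x \<le> B" using B by (intro Limsup_bounded) auto
  have lt: "liminf x < limsup x"
  proof (rule ccontr)
    assume "\<not> liminf x < limsup x"
    then have "limsup x \<le> liminf x" by simp
    moreover have "liminf x \<le> limsup x" by (simp add: Liminf_le_Limsup)
    ultimately have eq: "limsup x = liminf x" by simp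
    have "limsup x \<noteq> \<infinity>" "limsup x \<noteq> -\<infinity>" using ls li eq by auto
    then obtain L where L: "limsup x = ereal L" by (cases "limsup x") auto
    have "x \<longlonglongrightarrow> L" by (rule limsup_le_liminf_real) (use L eq in auto)
    then show False using nc by (auto simp: convergent_def)
  qed
  obtain l1 l2 where l1: "liminf x = ereal l1" and l2: "limsup x = ereal l2"
    using li ls lt by (cases "liminf x"; cases "limsup x") auto
  have "l1 < l2" "0 \<le> l1" using lt li l1 l2 by auto
  obtain a where a: "a \<in> \<rat>" "l1 < a" "a < (l1 + l2) / 2" using Rats_dense_in_real \<open>l1 < l2\<close>
    by (metis field_less_half_sum)
  have "(l1 + l2) / 2 < l2" using \<open>l1 < l2\<close> by simp
  then obtain b where b: "b \<in> \<rat>" "(l1 + l2) / 2 < b" "b < l2" using Rats_dense_in_real by blast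
  obtain qa where qa: "a = of_rat qa" using a(1) Rats_cases by blast
  obtain qb where qb: "b = of_rat qb" using b(1) Rats_cases by blast
  have lo: "\<exists>n\<ge>M. x n \<le> a" for M
  proof (rule ccontr)
    assume "\<not> (\<exists>n\<ge>M. x n \<le> a)"
    then have "eventually (\<lambda>n. ereal a \<le> ereal (x n)) sequentially"
      by (auto simp: eventually_sequentially intro!: exI[of _ M])
    then have "ereal a \<le> liminf x" by (intro Liminf_bounded)
    then show False using a l1 by simp
  qed
  have hi: "\<exists>n\<ge>M. b \<le> x n" for M
  proof (rule ccontr)
    assume "\<not> (\<exists>n\<ge>M. b \<le> x n)"
    then have "eventually (\<lambda>n. ereal (x n) \<le> ereal b) sequentially"
      by (auto simp: eventually_sequentially intro!: exI[of _ M])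
    then have "limsup x \<le> ereal b" by (intro Limsup_bounded)
    then show False using b l2 by simp
  qed
  have h1: "(0::real) < of_rat qa" using qa a \<open>0 \<le> l1\<close> by linarith
  have h2: "(of_rat qa::real) < of_rat qb" using qa qb a b by linarith
  from h1 h2 have "(0::real) \<le> of_rat qa" "(of_rat qa::real) < of_rat qb" by auto
  then have "0 \<le> qa" "qa < qb" by (simp_all add: of_rat_less)
  with noup[OF this] upA_freq[OF lo hi] qa qb show False by auto
qed




locale rbc = prob_space M for M :: "'m measure" +
  fixes xi :: "nat \<Rightarrow> 'm \<Rightarrow> 'i::finite"
  assumes rv: "\<And>k. k \<ge> 1 \<Longrightarrow> xi k \<in> measurable M (count_space UNIV)"
    and indep: "indep_vars (\<lambda>_. count_space UNIV) xi {1..}"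
    and ident: "\<And>k. k \<ge> 1 \<Longrightarrow> distr M (count_space UNIV) (xi k) = distr M (count_space UNIV) (xi 1)"
begin

primrec word :: "nat \<Rightarrow> 'm \<Rightarrow> 'i list" where
  "word 0 w = []" | "word (Suc k) w = xi (Suc k) w # word k w"

definition E :: "'i list \<Rightarrow> 'm set" where
  "E s = {w \<in> space M. word (length s) w = s}"

definition p :: "'i \<Rightarrow> real" where "p l = prob {w\<in>space M. xi 1 w = l}"

lemma length_word[simp]: "length (word k w) = k"
  by (induction k) auto

lemma word_drop: "k \<le> N \<Longrightarrow> word k w = drop (N - k) (word N w)"
proof (induction N)
  case 0 then show ?case by simp
next
  case (Suc N)
  show ?case
  proof (cases "k = Suc N")
    case True then show ?thesis by (simp add: prob_space)
  next
    case False
    then have "k \<le> N" using Suc by simp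
    then have "Suc N - k = Suc (N - k)" by simp
    then show ?thesis using Suc.IH[OF \<open>k \<le> N\<close>] by simp
  qed
qed

lemma word_nth: "i < k \<Longrightarrow> word k w ! i = xi (k - i) w"
proof (induction k arbitrary: i)
  case 0 then show ?case by simp
next
  case (Suc k) then show ?case by (cases i) auto
qed

lemma sets_xi: "k \<ge> 1 \<Longrightarrow> {w\<in>space M. xi k w = l} \<in> sets M"
proof -
  assume k: "k \<ge> 1"
  have "xi k -` {l} \<inter> space M \<in> sets M"
    using measurable_sets[OF rv[OF k], of "{l}"] by simp
  moreover have "xi k -` {l} \<inter> space M = {w\<in>space M. xi k w = l}" by auto
  ultimately show ?thesis by simp
qed

lemma E_Nil[simp]: "E [] = space M" by (simp add: E_def)

lemma E_Cons: "E (l # s) = E s \<inter> {w\<in>space M. xi (Suc (length s)) w = l}"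
  by (auto simp: E_def)

lemma E_sets[measurable]: "E s \<in> sets M"
  by (induction s) (auto simp: E_Cons intro!: sets_xi)

lemma prob_xi: "k \<ge> 1 \<Longrightarrow> prob {w\<in>space M. xi k w = l} = p l"
proof -
  assume k: "k \<ge> 1"
  have "\<And>j. j \<ge> 1 \<Longrightarrow> prob {w\<in>space M. xi j w = l} = measure (distr M (count_space UNIV) (xi j)) {l}"
    by (subst measure_distr) (auto intro: rv simp: vimage_def Int_def conj_commute)
  from this[OF k] this[of 1] ident[OF k] show ?thesis by (simp add: p_def)
qed

lemma E_eq: "E s = {w\<in>space M. \<forall>j\<in>{1..length s}. xi j w = s ! (length s - j)}"
proof -
  have "word (length s) w = s \<longleftrightarrow> (\<forall>j\<in>{1..length s}. xi j w = s ! (length s - j))" for w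
  proof
    assume "word (length s) w = s"
    then show "\<forall>j\<in>{1..length s}. xi j w = s ! (length s - j)"
      using word_nth[of "length s - j" "length s" w for j] by auto
  next
    assume H: "\<forall>j\<in>{1..length s}. xi j w = s ! (length s - j)"
    show "word (length s) w = s"
    proof (rule nth_equalityI)
      fix i assume "i < length (word (length s) w)"
      then have i: "i < length s" by simp
      then have "word (length s) w ! i = xi (length s - i) w" by (rule word_nth)
      also have "\<dots> = s ! (length s - (length s - i))" using H i by auto
      finally show "word (length s) w ! i = s ! i" using i by simp
    qed simp
  qed
  then show ?thesis by (auto simp: E_def)
qed

lemma prob_E_prod: "prob (E s) = (\<Prod>j\<in>{1..length s}. p (s ! (length s - j)))"
proof (cases "s = []")
  case True then show ?thesis by (simp add: prob_space)
next
  case False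
  let ?A = "\<lambda>j. xi j -` {s ! (length s - j)} \<inter> space M"
  have ind: "indep_sets (\<lambda>i. { xi i -` A \<inter> space M | A. A \<in> sets (count_space UNIV)}) {1..}"
    using indep unfolding indep_vars_def2 by blast
  have "prob (\<Inter>j\<in>{1..length s}. ?A j) = (\<Prod>j\<in>{1..length s}. prob (?A j))"
    using ind False unfolding indep_sets_def
    by (intro ind[unfolded indep_sets_def, THEN conjunct2, rule_format]) (auto simp: Suc_le_eq)
  moreover have "(\<Inter>j\<in>{1..length s}. ?A j) = E s"
    using False by (auto simp: E_eq Suc_le_eq)
  moreover have "prob (?A j) = p (s ! (length s - j))" if "j \<in> {1..length s}" for j
  proof -
    have "?A j = {w\<in>space M. xi j w = s ! (length s - j)}" by auto
    then show ?thesis using prob_xi[of j] that by simp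
  qed
  ultimately show ?thesis by simp
qed

lemma prob_E_Cons: "prob (E (l # s)) = p l * prob (E s)"
proof -
  have "(\<Prod>j\<in>{1..Suc (length s)}. p ((l#s) ! (Suc (length s) - j)))
      = p l * (\<Prod>j\<in>{1..length s}. p (s ! (length s - j)))"
  proof -
    have "(\<Prod>j\<in>{1..Suc (length s)}. p ((l#s) ! (Suc (length s) - j)))
       = p ((l#s) ! 0) * (\<Prod>j\<in>{1..length s}. p ((l#s) ! (Suc (length s) - j)))"
      by (simp add: prod.cl_ivl_Suc)
    also have "(\<Prod>j\<in>{1..length s}. p ((l#s) ! (Suc (length s) - j))) = (\<Prod>j\<in>{1..length s}. p (s ! (length s - j)))"
      by (intro prod.cong) (auto simp: Suc_diff_le)
    finally show ?thesis by simp
  qed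
  then show ?thesis by (simp add: prob_E_prod)
qed

lemma sets_word: "{w\<in>space M. \<Phi> (word N w)} \<in> sets M"
proof -
  have fin: "finite {s::'i list. set s \<subseteq> UNIV \<and> length s = N}"
    by (rule finite_lists_length_eq) simp
  have "{w\<in>space M. \<Phi> (word N w)} = (\<Union>s\<in>{s. set s \<subseteq> UNIV \<and> length s = N \<and> \<Phi> s}. E s)"
    by (auto simp: E_def)
  also have "\<dots> \<in> sets M"
    by (intro sets.finite_UN finite_subset[OF _ fin]) auto
  finally show ?thesis .
qed

lemma sets_path: "{w\<in>space M. \<Psi> (\<lambda>k. word (min k N) w)} \<in> sets M"
proof -
  have "{w\<in>space M. \<Psi> (\<lambda>k. word (min k N) w)} = {w\<in>space M. \<Psi> (\<lambda>k. drop (N - min k N) (word N w))}"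
    using word_drop[of "min k N" N for k] by simp
  then show ?thesis using sets_word by simp
qed

lemma split_E:
  assumes Q: "Q \<inter> space M \<in> sets M"
  shows "prob (E s \<inter> Q) = (\<Sum>l\<in>UNIV. prob (E (l # s) \<inter> Q))"
proof -
  have "E s \<inter> Q = (\<Union>l\<in>UNIV. E (l # s) \<inter> (Q \<inter> space M))"
    by (auto simp: E_Cons) (auto simp: E_def)
  moreover have "prob (\<Union>l\<in>UNIV. E (l # s) \<inter> (Q \<inter> space M)) = (\<Sum>l\<in>UNIV. prob (E (l # s) \<inter> (Q \<inter> space M)))"
  proof (intro measure_finite_Union)
    show "(\<lambda>l. E (l # s) \<inter> (Q \<inter> space M)) ` UNIV \<subseteq> sets M" using Q by auto
    show "disjoint_family_on (\<lambda>l. E (l # s) \<inter> (Q \<inter> space M)) UNIV"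
      by (auto simp: disjoint_family_on_def E_Cons)
  qed auto
  moreover have "E (l # s) \<inter> (Q \<inter> space M) = E (l # s) \<inter> Q" for l
    by (auto simp: E_def)
  ultimately show ?thesis by simp
qed

lemma sum_p: "(\<Sum>l\<in>UNIV. p l) = 1"
  using split_E[of "space M" "[]"] by (simp add: prob_E_Cons prob_space E_def[symmetric])

lemma p_nonneg: "p l \<ge> 0" by (simp add: p_def)

lemma ville:
  fixes f :: "'i list \<Rightarrow> real" and b :: real
  assumes f0: "\<And>s. f s \<ge> 0" and super: "\<And>s. (\<Sum>l\<in>UNIV. p l * f (l # s)) \<le> f s" and b: "b > 0"
  shows "b * prob (E s \<inter> {w. \<exists>k. length s \<le> k \<and> k \<le> length s + d \<and> b \<le> f (word k w)}) \<le> f s * prob (E s)"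
proof (induction d arbitrary: s)
  case 0
  show ?case
  proof (cases "b \<le> f s")
    case True
    have "b * prob (E s \<inter> {w. \<exists>k. length s \<le> k \<and> k \<le> length s + 0 \<and> b \<le> f (word k w)}) \<le> b * prob (E s)"
      using b by (intro mult_left_mono finite_measure_mono) auto
    also have "\<dots> \<le> f s * prob (E s)" using True by (intro mult_right_mono) auto
    finally show ?thesis .
  next
    case False
    then have "E s \<inter> {w. \<exists>k. length s \<le> k \<and> k \<le> length s + 0 \<and> b \<le> f (word k w)} = {}"
      by (auto simp: E_def)
    then show ?thesis using f0 by simp
  qed
next
  case (Suc d)
  show ?case
  proof (cases "b \<le> f s")
    case True
    have "b * prob (E s \<inter> {w. \<exists>k. length s \<le> k \<and> k \<le> length s + Suc d \<and> b \<le> f (word k w)}) \<le> b * prob (E s)"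
      using b by (intro mult_left_mono finite_measure_mono) auto
    also have "\<dots> \<le> f s * prob (E s)" using True by (intro mult_right_mono) auto
    finally show ?thesis .
  next
    case False
    let ?Q = "{w. \<exists>k. Suc (length s) \<le> k \<and> k \<le> length s + Suc d \<and> b \<le> f (word k w)}"
    have eq: "E s \<inter> {w. \<exists>k. length s \<le> k \<and> k \<le> length s + Suc d \<and> b \<le> f (word k w)} = E s \<inter> ?Q"
      using False apply (auto simp: E_def)
       apply (metis le_antisym not_less_eq_eq)
      by (meson Suc_leD)
    have Qm: "?Q \<inter> space M \<in> sets M"
    proof -
      have "?Q \<inter> space M = {w\<in>space M. (\<lambda>W. \<exists>k. Suc (length s) \<le> k \<and> k \<le> length s + Suc d \<and> b \<le> f (W k)) (\<lambda>k. word (min k (length s + Suc d)) w)}"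
        by (auto; metis min.absorb1)
      then show ?thesis using sets_path by simp
    qed
    have "b * prob (E s \<inter> ?Q) = (\<Sum>l\<in>UNIV. b * prob (E (l # s) \<inter> ?Q))"
      by (subst split_E[OF Qm]) (simp add: sum_distrib_left)
    also have "\<dots> \<le> (\<Sum>l\<in>UNIV. f (l # s) * prob (E (l # s)))"
    proof (intro sum_mono)
      fix l
      have "?Q = {w. \<exists>k. length (l # s) \<le> k \<and> k \<le> length (l # s) + d \<and> b \<le> f (word k w)}" by auto
      then show "b * prob (E (l # s) \<inter> ?Q) \<le> f (l # s) * prob (E (l # s))" using Suc.IH[of "l # s"] by simp
    qed
    also have "\<dots> = (\<Sum>l\<in>UNIV. p l * f (l # s)) * prob (E s)"
      by (simp add: prob_E_Cons sum_distrib_right sum_distrib_left mult_ac)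
    also have "\<dots> \<le> f s * prob (E s)" using super by (intro mult_right_mono) auto
    finally show ?thesis using eq by simp
  qed
qed

lemma sets_H: "{w\<in>space M. H (word k w)} \<in> sets M"
  using sets_word[of H k] by simp

lemma first_hit:
  fixes f :: "'i list \<Rightarrow> real" and H :: "real \<Rightarrow> bool" and R :: "nat \<Rightarrow> 'm set" and q :: real
  assumes R: "\<And>k. R k \<in> sets M" and anti: "\<And>k k'. k \<le> k' \<Longrightarrow> R k' \<subseteq> R k"
    and hyp: "\<And>s'. H (f s') \<Longrightarrow> prob (E s' \<inter> R (length s')) \<le> q * prob (E s')" and q: "q \<ge> 0"
  shows "prob (E s \<inter> {w. \<exists>k. length s \<le> k \<and> k \<le> length s + d \<and> H (f (word k w)) \<and> w \<in> R k})
     \<le> q * prob (E s \<inter> {w. \<exists>k. length s \<le> k \<and> k \<le> length s + d \<and> H (f (word k w))})"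
proof (induction d arbitrary: s)
  case (0 s)
  show ?case
  proof (cases "H (f s)")
    case True
    have "prob (E s \<inter> {w. \<exists>k. length s \<le> k \<and> k \<le> length s + 0 \<and> H (f (word k w)) \<and> w \<in> R k}) \<le> prob (E s \<inter> R (length s))"
      using R by (intro finite_measure_mono) auto
    also have "\<dots> \<le> q * prob (E s)" using hyp True by simp
    also have "prob (E s) = prob (E s \<inter> {w. \<exists>k. length s \<le> k \<and> k \<le> length s + 0 \<and> H (f (word k w))})"
      using True by (intro arg_cong[where f=prob]) (auto simp: E_def)
    finally show ?thesis .
  next
    case False
    then have "E s \<inter> {w. \<exists>k. length s \<le> k \<and> k \<le> length s + 0 \<and> H (f (word k w)) \<and> w \<in> R k} = {}"
      "E s \<inter> {w. \<exists>k. length s \<le> k \<and> k \<le> length s + 0 \<and> H (f (word k w))} = {}"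
      by (auto simp: E_def)
    then show ?thesis by simp
  qed
next
  case (Suc d s)
  show ?case
  proof (cases "H (f s)")
    case True
    have "prob (E s \<inter> {w. \<exists>k. length s \<le> k \<and> k \<le> length s + Suc d \<and> H (f (word k w)) \<and> w \<in> R k}) \<le> prob (E s \<inter> R (length s))"
      using R anti by (intro finite_measure_mono) auto
    also have "\<dots> \<le> q * prob (E s)" using hyp True by simp
    also have "prob (E s) = prob (E s \<inter> {w. \<exists>k. length s \<le> k \<and> k \<le> length s + Suc d \<and> H (f (word k w))})"
      using True by (intro arg_cong[where f=prob]) (auto simp: E_def)
    finally show ?thesis .
  next
    case False
    let ?Q = "{w. \<exists>k. Suc (length s) \<le> k \<and> k \<le> length s + Suc d \<and> H (f (word k w)) \<and> w \<in> R k}"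
    let ?Q' = "{w. \<exists>k. Suc (length s) \<le> k \<and> k \<le> length s + Suc d \<and> H (f (word k w))}"
    have eq: "E s \<inter> {w. \<exists>k. length s \<le> k \<and> k \<le> length s + Suc d \<and> H (f (word k w)) \<and> w \<in> R k} = E s \<inter> ?Q"
      using False apply (auto simp: E_def)
       apply (metis le_antisym not_less_eq_eq)
      by (meson Suc_leD)
    have eq': "E s \<inter> {w. \<exists>k. length s \<le> k \<and> k \<le> length s + Suc d \<and> H (f (word k w))} = E s \<inter> ?Q'"
      using False apply (auto simp: E_def)
       apply (metis le_antisym not_less_eq_eq)
      by (meson Suc_leD)
    have Qm: "?Q \<inter> space M \<in> sets M"
    proof -
      have "?Q \<inter> space M = (\<Union>k\<in>{Suc (length s)..length s + Suc d}. {w\<in>space M. H (f (word k w))} \<inter> R k)"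
        using R[THEN sets.sets_into_space] by auto
      also have "\<dots> \<in> sets M" using R by (intro sets.finite_UN) (auto intro: sets.Int sets_H)
      finally show ?thesis .
    qed
    have Qm': "?Q' \<inter> space M \<in> sets M"
    proof -
      have "?Q' \<inter> space M = (\<Union>k\<in>{Suc (length s)..length s + Suc d}. {w\<in>space M. H (f (word k w))})"
        by auto
      also have "\<dots> \<in> sets M" by (intro sets.finite_UN) (auto intro: sets_H)
      finally show ?thesis .
    qed
    have "prob (E s \<inter> ?Q) = (\<Sum>l\<in>UNIV. prob (E (l # s) \<inter> ?Q))"
      by (subst split_E[OF Qm]) simp
    also have "\<dots> \<le> (\<Sum>l\<in>UNIV. q * prob (E (l # s) \<inter> ?Q'))"
    proof (intro sum_mono)
      fix l
      have "?Q = {w. \<exists>k. length (l # s) \<le> k \<and> k \<le> length (l # s) + d \<and> H (f (word k w)) \<and> w \<in> R k}"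
        "?Q' = {w. \<exists>k. length (l # s) \<le> k \<and> k \<le> length (l # s) + d \<and> H (f (word k w))}" by auto
      then show "prob (E (l # s) \<inter> ?Q) \<le> q * prob (E (l # s) \<inter> ?Q')" using Suc.IH[of "l # s"] by simp
    qed
    also have "\<dots> = q * prob (E s \<inter> ?Q')"
      by (subst split_E[OF Qm']) (simp add: sum_distrib_left)
    finally show ?thesis using eq eq' by simp
  qed
qed

context
  fixes f :: "'i list \<Rightarrow> real" and a b :: real
  assumes f0: "\<And>s. f s \<ge> 0" and super: "\<And>s. (\<Sum>l\<in>UNIV. p l * f (l # s)) \<le> f s"
    and a0: "0 \<le> a" and ab: "a < b"
begin

definition Aev :: "nat \<Rightarrow> nat \<Rightarrow> nat \<Rightarrow> 'm set" where
  "Aev j N n = {w\<in>space M. upA (\<lambda>k. f (word k w)) a b j n N}"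

definition Bev :: "nat \<Rightarrow> nat \<Rightarrow> nat \<Rightarrow> 'm set" where
  "Bev j N n = {w\<in>space M. \<exists>k'. n \<le> k' \<and> k' \<le> N \<and> b \<le> f (word k' w) \<and> upA (\<lambda>k. f (word k w)) a b j k' N}"

lemma Aev_sets: "Aev j N n \<in> sets M"
proof -
  have "Aev j N n = {w\<in>space M. (\<lambda>W. upA (\<lambda>k. f (W k)) a b j n N) (\<lambda>k. word (min k N) w)}"
  proof -
    have "upA (\<lambda>k. f (word k w)) a b j n N = upA (\<lambda>k. f (word (min k N) w)) a b j n N" for w
      by (rule upA_cong) simp
    then show ?thesis unfolding Aev_def by simp
  qed
  then show ?thesis using sets_path by simp
qed

lemma Bev_sets: "Bev j N n \<in> sets M"
proof -
  have "Bev j N n = (\<Union>k'\<in>{n..N}. {w\<in>space M. b \<le> f (word k' w)} \<inter> Aev j N k')"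
    unfolding Bev_def Aev_def by auto
  also have "\<dots> \<in> sets M" by (intro sets.finite_UN) (auto intro: sets.Int sets_H Aev_sets)
  finally show ?thesis .
qed

lemma b0: "b > 0" using a0 ab by simp

lemma CB_from_CA:
  assumes CA: "\<And>s. prob (E s \<inter> Aev j N (length s)) \<le> (a/b)^j * prob (E s)"
  shows "prob (E s \<inter> Bev j N (length s)) \<le> (a/b)^j * (f s / b) * prob (E s)"
proof (cases "length s \<le> N")
  case False
  then have "E s \<inter> Bev j N (length s) = {}" by (auto simp: Bev_def)
  then show ?thesis using f0 a0 b0 by simp
next
  case True
  define d where "d = N - length s"
  have N: "N = length s + d" using True by (simp add: d_def)
  have eq: "E s \<inter> Bev j N (length s) = E s \<inter> {w. \<exists>k. length s \<le> k \<and> k \<le> length s + d \<and> (\<lambda>v. b \<le> v) (f (word k w)) \<and> w \<in> Aev j N k}"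
    unfolding Bev_def Aev_def N by (auto simp: E_def)
  have "prob (E s \<inter> {w. \<exists>k. length s \<le> k \<and> k \<le> length s + d \<and> (\<lambda>v. b \<le> v) (f (word k w)) \<and> w \<in> Aev j N k})
     \<le> (a/b)^j * prob (E s \<inter> {w. \<exists>k. length s \<le> k \<and> k \<le> length s + d \<and> (\<lambda>v. b \<le> v) (f (word k w))})"
  proof (rule first_hit)
    show "\<And>k. Aev j N k \<in> sets M" by (rule Aev_sets)
    show "\<And>k k'. k \<le> k' \<Longrightarrow> Aev j N k' \<subseteq> Aev j N k" by (auto simp: Aev_def intro: upA_anti)
    show "\<And>s'. b \<le> f s' \<Longrightarrow> prob (E s' \<inter> Aev j N (length s')) \<le> (a/b)^j * prob (E s')" using CA by simp
    show "0 \<le> (a/b)^j" using a0 b0 by simp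
  qed
  also have "\<dots> \<le> (a/b)^j * (f s / b * prob (E s))"
  proof (intro mult_left_mono)
    have "b * prob (E s \<inter> {w. \<exists>k. length s \<le> k \<and> k \<le> length s + d \<and> b \<le> f (word k w)}) \<le> f s * prob (E s)"
      by (rule ville[OF f0 super b0])
    then show "prob (E s \<inter> {w. \<exists>k. length s \<le> k \<and> k \<le> length s + d \<and> (\<lambda>v. b \<le> v) (f (word k w))}) \<le> f s / b * prob (E s)"
      using b0 by (simp add: field_simps)
  qed (use a0 b0 in simp)
  finally show ?thesis using eq by (simp add: mult_ac)
qed

lemma upcross: "prob (E s \<inter> Aev j N (length s)) \<le> (a/b)^j * prob (E s)"
proof (induction j arbitrary: s)
  case 0
  have "E s \<inter> Aev 0 N (length s) = E s" by (auto simp: Aev_def E_def)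
  then show ?case by simp
next
  case (Suc j s)
  note CB = CB_from_CA[OF Suc.IH]
  show ?case
  proof (cases "length s \<le> N")
    case False
    then have "E s \<inter> Aev (Suc j) N (length s) = {}" by (auto simp: Aev_def)
    then show ?thesis using a0 b0 by simp
  next
    case True
    define d where "d = N - length s"
    have N: "N = length s + d" using True by (simp add: d_def)
    have eq: "E s \<inter> Aev (Suc j) N (length s) = E s \<inter> {w. \<exists>k. length s \<le> k \<and> k \<le> length s + d \<and> (\<lambda>v. v \<le> a) (f (word k w)) \<and> w \<in> Bev j N k}"
      unfolding Bev_def Aev_def N by (auto simp: E_def)
    have "prob (E s \<inter> {w. \<exists>k. length s \<le> k \<and> k \<le> length s + d \<and> (\<lambda>v. v \<le> a) (f (word k w)) \<and> w \<in> Bev j N k})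
       \<le> (a/b)^(Suc j) * prob (E s \<inter> {w. \<exists>k. length s \<le> k \<and> k \<le> length s + d \<and> (\<lambda>v. v \<le> a) (f (word k w))})"
    proof (rule first_hit)
      show "\<And>k. Bev j N k \<in> sets M" by (rule Bev_sets)
      show "\<And>k k'. k \<le> k' \<Longrightarrow> Bev j N k' \<subseteq> Bev j N k" unfolding Bev_def by (blast intro: order_trans)
      show "0 \<le> (a/b)^(Suc j)" using a0 b0 by simp
      fix s' assume fs: "f s' \<le> a"
      have "prob (E s' \<inter> Bev j N (length s')) \<le> (a/b)^j * (f s' / b) * prob (E s')" by (rule CB)
      also have "\<dots> \<le> (a/b)^j * (a / b) * prob (E s')"
        using fs a0 b0 by (intro mult_right_mono mult_left_mono divide_right_mono) auto
      finally show "prob (E s' \<inter> Bev j N (length s')) \<le> (a/b)^(Suc j) * prob (E s')" by (simp add: mult_ac)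
    qed
    also have "\<dots> \<le> (a/b)^(Suc j) * prob (E s)"
      using a0 b0 by (intro mult_left_mono finite_measure_mono) auto
    finally show ?thesis using eq by simp
  qed
qed

lemma AE_noup: "AE w in M. \<not> (\<forall>j. \<exists>N. upA (\<lambda>k. f (word k w)) a b j 0 N)"
proof -
  let ?U = "{w\<in>space M. \<forall>j. \<exists>N. upA (\<lambda>k. f (word k w)) a b j 0 N}"
  have Us: "?U \<in> sets M"
  proof (intro sets.sets_Collect_countable_All sets.sets_Collect_countable_Ex)
    fix j N show "{w\<in>space M. upA (\<lambda>k. f (word k w)) a b j 0 N} \<in> sets M"
      using Aev_sets[of j N 0] by (simp add: Aev_def)
  qed
  have bnd: "prob ?U \<le> (a/b)^j" for j
  proof -
    have inc: "incseq (\<lambda>N. Aev j N 0)"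
      by (intro incseq_SucI) (auto simp: Aev_def intro: upA_mono_N)
    have lim: "(\<lambda>N. prob (Aev j N 0)) \<longlonglongrightarrow> prob (\<Union>N. Aev j N 0)"
      by (rule finite_Lim_measure_incseq) (use inc Aev_sets in auto)
    have "prob (Aev j N 0) \<le> (a/b)^j" for N
      using upcross[of "[]" j N] by (simp add: prob_space Int_absorb1 Aev_def)
    then have "prob (\<Union>N. Aev j N 0) \<le> (a/b)^j"
      by (intro LIMSEQ_le_const2[OF lim]) auto
    moreover have "prob ?U \<le> prob (\<Union>N. Aev j N 0)"
      using Aev_sets by (intro finite_measure_mono) (auto simp: Aev_def)
    ultimately show ?thesis by simp
  qed
  have lim0: "(\<lambda>j. (a/b)^j) \<longlonglongrightarrow> 0"
    using a0 ab b0 by (intro LIMSEQ_power_zero) (simp add: abs_if divide_less_eq)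
  have "prob ?U \<le> 0"
    by (rule LIMSEQ_le_const[OF lim0]) (use bnd in auto)
  then have "prob ?U = 0" using measure_nonneg[of M ?U] by linarith
  then have "?U \<in> null_sets M"
    using Us by (simp add: null_sets_def emeasure_eq_measure)
  then show ?thesis by (rule AE_I') auto
qed

end

lemma AE_bdd:
  fixes f :: "'i list \<Rightarrow> real"
  assumes f0: "\<And>s. f s \<ge> 0" and super: "\<And>s. (\<Sum>l\<in>UNIV. p l * f (l # s)) \<le> f s"
  shows "AE w in M. \<exists>n::nat. \<forall>k. f (word k w) < real (Suc n)"
proof -
  let ?U = "{w\<in>space M. \<forall>n::nat. \<exists>k. real (Suc n) \<le> f (word k w)}"
  have Us: "?U \<in> sets M"
  proof (intro sets.sets_Collect_countable_All sets.sets_Collect_countable_Ex)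
    fix n k show "{w\<in>space M. real (Suc n) \<le> f (word k w)} \<in> sets M" by (rule sets_H)
  qed
  have bnd: "prob ?U * real (Suc n) \<le> f []" for n
  proof -
    define V where "V N = {w\<in>space M. \<exists>k. 0 \<le> k \<and> k \<le> 0 + N \<and> real (Suc n) \<le> f (word k w)}" for N
    have Vs: "V N \<in> sets M" for N
    proof -
      have eq: "V N = (\<Union>k\<in>{0..N}. {w\<in>space M. real (Suc n) \<le> f (word k w)})" by (auto simp: V_def)
      have "(\<Union>k\<in>{0..N}. {w\<in>space M. real (Suc n) \<le> f (word k w)}) \<in> sets M"
        by (intro sets.finite_UN) (auto intro: sets_H)
      then show ?thesis unfolding eq .
    qed
    have inc: "incseq V"
      unfolding incseq_Suc_iff V_def by (auto intro: le_SucI)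
    have lim: "(\<lambda>N. prob (V N)) \<longlonglongrightarrow> prob (\<Union>N. V N)"
      by (rule finite_Lim_measure_incseq) (use inc Vs in auto)
    have "real (Suc n) * prob (V N) \<le> f []" for N
    proof -
      have e: "E [] \<inter> {w. \<exists>k. length [] \<le> k \<and> k \<le> length [] + N \<and> real (Suc n) \<le> f (word k w)} = V N"
        by (auto simp: V_def)
      have "real (Suc n) * prob (E [] \<inter> {w. \<exists>k. length [] \<le> k \<and> k \<le> length [] + N \<and> real (Suc n) \<le> f (word k w)}) \<le> f [] * prob (E [])"
        using ville[OF f0 super, of "real (Suc n)" "[]" N] by (simp only: length_0_conv list.size)
      then show ?thesis unfolding e by (simp add: prob_space)
    qed
    then have "prob (V N) \<le> f [] / real (Suc n)" for N
      by (subst le_divide_eq) (simp add: mult.commute)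
    then have "prob (\<Union>N. V N) \<le> f [] / real (Suc n)"
      by (intro LIMSEQ_le_const2[OF lim]) auto
    moreover have "prob ?U \<le> prob (\<Union>N. V N)"
    proof (intro finite_measure_mono)
      show "?U \<subseteq> (\<Union>N. V N)"
      proof
        fix w assume "w \<in> ?U"
        then obtain k where k: "real (Suc n) \<le> f (word k w)" "w \<in> space M" by blast
        then have "w \<in> V k" unfolding V_def by auto
        then show "w \<in> (\<Union>N. V N)" by blast
      qed
      show "(\<Union>N. V N) \<in> sets M" using Vs by blast
    qed
    ultimately have "prob ?U \<le> f [] / real (Suc n)" by linarith
    then show ?thesis by (subst (asm) le_divide_eq) simp
  qed
  have "prob ?U \<le> 0"
  proof (rule ccontr)
    assume "\<not> prob ?U \<le> 0"
    then have pos: "prob ?U > 0" by simp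
    obtain n :: nat where "f [] / prob ?U < real n" using reals_Archimedean2 by blast
    then have "f [] < real n * prob ?U" using pos by (simp add: field_simps)
    also have "\<dots> \<le> prob ?U * real (Suc n)" using pos by (simp add: mult.commute)
    finally show False using bnd[of n] by simp
  qed
  then have "prob ?U = 0" using measure_nonneg[of M ?U] by linarith
  then have "?U \<in> null_sets M"
    using Us by (simp add: null_sets_def emeasure_eq_measure)
  then show ?thesis by (rule AE_I') (auto simp: not_less)
qed

lemma AE_convergent:
  fixes f :: "'i list \<Rightarrow> real"
  assumes f0: "\<And>s. f s \<ge> 0" and super: "\<And>s. (\<Sum>l\<in>UNIV. p l * f (l # s)) \<le> f s"
  shows "AE w in M. convergent (\<lambda>k. f (word k w))"
proof -
  have "AE w in M. \<forall>q::rat\<times>rat. 0 \<le> fst q \<longrightarrow> fst q < snd q \<longrightarrow>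
     \<not> (\<forall>j. \<exists>N. upA (\<lambda>k. f (word k w)) (of_rat (fst q)) (of_rat (snd q)) j 0 N)"
  proof (subst AE_all_countable, intro allI)
    fix q :: "rat \<times> rat"
    show "AE w in M. 0 \<le> fst q \<longrightarrow> fst q < snd q \<longrightarrow>
     \<not> (\<forall>j. \<exists>N. upA (\<lambda>k. f (word k w)) (of_rat (fst q)) (of_rat (snd q)) j 0 N)"
    proof (cases "0 \<le> fst q \<and> fst q < snd q")
      case True
      then have "0 \<le> (of_rat (fst q)::real)" "(of_rat (fst q)::real) < of_rat (snd q)"
        by (simp_all add: of_rat_less)
      from AE_noup[OF f0 super this] show ?thesis by (rule AE_mp) auto
    qed auto
  qed
  moreover note AE_bdd[OF f0 super]
  ultimately show ?thesis
  proof (eventually_elim)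
    case (elim w)
    then obtain n :: nat where n: "\<And>k. f (word k w) < real (Suc n)" by blast
    show ?case
    proof (rule conv_det)
      show "\<And>k. 0 \<le> f (word k w)" by (rule f0)
      show "\<And>k. f (word k w) \<le> real (Suc n)" using n less_imp_le by blast
      fix qa qb :: rat assume "0 \<le> qa" "qa < qb"
      then show "\<not> (\<forall>j. \<exists>N. upA (\<lambda>k. f (word k w)) (of_rat qa) (of_rat qb) j 0 N)"
        using elim(1)[rule_format, of "(qa, qb)"] by simp
    qed
  qed
qed

end



definition wn :: "('i::finite \<Rightarrow> real) \<Rightarrow> ('a::euclidean_space)^'i \<Rightarrow> real" where
  "wn p v = (\<Sum>l\<in>UNIV. (norm (v $ l))\<^sup>2 / p l)"

lemma norm_sq_vec: "(norm (v :: ('a::real_normed_vector)^'i::finite))\<^sup>2 = (\<Sum>l\<in>UNIV. (norm (v $ l))\<^sup>2)"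
  unfolding norm_vec_def L2_set_def by (simp add: sum_nonneg)

lemma sum_if_one:
  fixes F G :: "'i::finite \<Rightarrow> real"
  shows "(\<Sum>j\<in>UNIV. if j = l then F j else G j) = (\<Sum>j\<in>UNIV. G j) + F l - G l"
proof -
  have "(\<Sum>j\<in>UNIV. if j = l then F j else G j) = (if l = l then F l else G l) + (\<Sum>j\<in>UNIV - {l}. if j = l then F j else G j)"
    by (subst sum.remove[of UNIV l]) auto
  also have "(\<Sum>j\<in>UNIV - {l}. if j = l then F j else G j) = (\<Sum>j\<in>UNIV - {l}. G j)"
    by (intro sum.cong) auto
  also have "(\<Sum>j\<in>UNIV. G j) = G l + (\<Sum>j\<in>UNIV - {l}. G j)"
    by (subst sum.remove[of UNIV l]) auto
  ultimately show ?thesis by simp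
qed

lemma S_hat_nth: "S_hat S l z $ j = (if j = l then S z $ l else z $ j)"
  by (simp add: S_hat_def)

lemma wn_S_hat:
  "wn p (S_hat S l z - d) = wn p (z - d) + ((norm (S z $ l - d $ l))\<^sup>2 - (norm (z $ l - d $ l))\<^sup>2) / p l"
proof -
  have "wn p (S_hat S l z - d) = (\<Sum>j\<in>UNIV. if j = l then (norm (S z $ l - d $ l))\<^sup>2 / p l else (norm (z $ j - d $ j))\<^sup>2 / p j)"
    unfolding wn_def by (intro sum.cong) (auto simp: S_hat_nth)
  also have "\<dots> = wn p (z - d) + (norm (S z $ l - d $ l))\<^sup>2 / p l - (norm (z $ l - d $ l))\<^sup>2 / p l"
    by (subst sum_if_one) (simp add: wn_def)
  finally show ?thesis by (simp add: diff_divide_distrib)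
qed

lemma wn_expect:
  assumes p: "\<And>l. p l > 0" and sp: "(\<Sum>l\<in>UNIV. p l) = 1"
  shows "(\<Sum>l\<in>UNIV. p l * wn p (S_hat S l z - d)) = wn p (z - d) + (norm (S z - d))\<^sup>2 - (norm (z - d))\<^sup>2"
proof -
  have "(\<Sum>l\<in>UNIV. p l * wn p (S_hat S l z - d))
      = (\<Sum>l\<in>UNIV. p l * wn p (z - d) + ((norm (S z $ l - d $ l))\<^sup>2 - (norm (z $ l - d $ l))\<^sup>2))"
  proof (intro sum.cong refl)
    fix l
    have "p l \<noteq> 0" using p[of l] by simp
    then show "p l * wn p (S_hat S l z - d) = p l * wn p (z - d) + ((norm (S z $ l - d $ l))\<^sup>2 - (norm (z $ l - d $ l))\<^sup>2)"
      by (simp add: wn_S_hat distrib_left)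
  qed
  also have "\<dots> = wn p (z - d) + (\<Sum>l\<in>UNIV. (norm ((S z - d) $ l))\<^sup>2) - (\<Sum>l\<in>UNIV. (norm ((z - d) $ l))\<^sup>2)"
    by (simp add: sum.distrib sum_subtractf sum_distrib_right[symmetric] sp)
  finally show ?thesis by (simp add: norm_sq_vec)
qed

lemma fne_ineq:
  fixes S :: "'b::real_inner \<Rightarrow> 'b"
  assumes fne: "firmly_nonexpansive_on Y S" and z: "z \<in> Y" and d: "d \<in> Y" and Sd: "S d = d"
  shows "(norm (S z - d))\<^sup>2 \<le> (norm (z - d))\<^sup>2 - (norm (S z - z))\<^sup>2"
proof -
  have i: "inner (z - d) (S z - d) \<ge> (norm (S z - d))\<^sup>2"
    using fne z d Sd unfolding firmly_nonexpansive_on_def by force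
  have sq: "\<And>a b::'b. (norm (a + b))\<^sup>2 = (norm a)\<^sup>2 + (norm b)\<^sup>2 + 2 * inner a b"
    by (simp add: power2_norm_eq_inner inner_add_left inner_add_right inner_commute)
  have "(norm (z - d))\<^sup>2 = (norm ((S z - d) + (z - S z)))\<^sup>2" by simp
  also have "\<dots> = (norm (S z - d))\<^sup>2 + (norm (z - S z))\<^sup>2 + 2 * inner (S z - d) (z - S z)"
    by (rule sq)
  finally have e: "(norm (z - d))\<^sup>2 = (norm (S z - d))\<^sup>2 + (norm (z - S z))\<^sup>2 + 2 * inner (S z - d) (z - S z)" .
  have "inner (S z - d) (z - S z) = inner (z - d) (S z - d) - (norm (S z - d))\<^sup>2"
    by (simp add: power2_norm_eq_inner inner_diff_left inner_diff_right inner_commute)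
  then have "inner (S z - d) (z - S z) \<ge> 0" using i by simp
  moreover have "norm (z - S z) = norm (S z - z)" by (rule norm_minus_commute)
  ultimately show ?thesis using e by simp
qed

lemma fne_lip:
  fixes S :: "'b::real_inner \<Rightarrow> 'b"
  assumes fne: "firmly_nonexpansive_on Y S" and z: "z \<in> Y" and d: "d \<in> Y"
  shows "norm (S z - S d) \<le> norm (z - d)"
proof -
  have "(norm (S z - S d))\<^sup>2 \<le> inner (z - d) (S z - S d)"
    using fne z d unfolding firmly_nonexpansive_on_def by force
  also have "\<dots> \<le> norm (z - d) * norm (S z - S d)" by (rule norm_cauchy_schwarz)
  finally have "norm (S z - S d) * norm (S z - S d) \<le> norm (z - d) * norm (S z - S d)"
    by (simp add: power2_eq_square)
  then show ?thesis
    by (cases "norm (S z - S d) = 0") (auto simp: mult_le_cancel_right)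
qed


lemma dense_subset:
  fixes A :: "'b::{metric_space, second_countable_topology} set"
  shows "\<exists>D. countable D \<and> D \<subseteq> A \<and> (\<forall>u\<in>A. \<forall>e>0. \<exists>d\<in>D. dist u d < e)"
proof -
  obtain Q :: "'b set" where Q: "countable Q" "\<And>X. open X \<Longrightarrow> X \<noteq> {} \<Longrightarrow> \<exists>d\<in>Q. d \<in> X"
    by (erule countable_dense_setE)
  define c where "c qn = (SOME d. d \<in> A \<and> dist (fst qn) d < 1 / Suc (snd qn))" for qn :: "'b \<times> nat"
  define I where "I = {qn \<in> Q \<times> UNIV. \<exists>d\<in>A. dist (fst qn) d < 1 / Suc (snd qn)}"
  have cI: "c qn \<in> A \<and> dist (fst qn) (c qn) < 1 / Suc (snd qn)" if "qn \<in> I" for qn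
  proof -
    from that have "\<exists>d. d \<in> A \<and> dist (fst qn) d < 1 / Suc (snd qn)" unfolding I_def by blast
    then show ?thesis unfolding c_def by (rule someI_ex)
  qed
  have c1: "countable (c ` I)"
  proof -
    have "I \<subseteq> Q \<times> UNIV" unfolding I_def by blast
    moreover have "countable (Q \<times> (UNIV :: nat set))" using Q(1) by simp
    ultimately show ?thesis by (intro countable_image) (rule countable_subset)
  qed
  have c2: "c ` I \<subseteq> A" using cI by auto
  have c3: "\<exists>d\<in>c ` I. dist u d < e" if u: "u \<in> A" and e: "e > 0" for u e
  proof -
    have e2: "e / 2 > 0" using e by simp
    obtain n :: nat where n: "1 / real (Suc n) < e / 2" using nat_approx_posE[OF e2] by blast
    have "u \<in> ball u (1 / Suc n)" by simp
    then have "ball u (1 / Suc n) \<noteq> {}" by blast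
    then obtain q where q: "q \<in> Q" "q \<in> ball u (1 / Suc n)"
      using Q(2)[OF open_ball] by blast
    have qn: "(q, n) \<in> I" using q u unfolding I_def by (auto simp: dist_commute)
    have "dist u (c (q, n)) \<le> dist u q + dist q (c (q, n))" by (rule dist_triangle)
    also have "\<dots> < 1 / Suc n + 1 / Suc n" using cI[OF qn] q by (intro add_strict_mono) auto
    also have "\<dots> < e" using n by simp
    finally have "dist u (c (q, n)) < e" .
    then show ?thesis by (rule rev_bexI[OF imageI[OF qn]])
  qed
  have "countable (c ` I) \<and> c ` I \<subseteq> A \<and> (\<forall>u\<in>A. \<forall>e>0. \<exists>d\<in>c ` I. dist u d < e)"
    using c1 c2 c3 by simp
  then show ?thesis by (rule exI)
qed

lemma wn_nonneg: "(\<And>l. p l > 0) \<Longrightarrow> wn p v \<ge> 0"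
  unfolding wn_def by (intro sum_nonneg) (auto intro: divide_nonneg_pos)

lemma p_le1: fixes p :: "'i::finite \<Rightarrow> real" assumes p: "\<And>l. p l > 0" and sp: "(\<Sum>l\<in>UNIV. p l) = 1" shows "p l \<le> 1"
proof -
  have "p l \<le> (\<Sum>l\<in>UNIV. p l)" by (rule member_le_sum[where f=p]) (auto intro: less_imp_le p)
  then show ?thesis using sp by simp
qed

lemma wn_ge:
  assumes p: "\<And>l. p l > 0" and sp: "(\<Sum>l\<in>UNIV. p l) = 1"
  shows "(norm v)\<^sup>2 \<le> wn p (v :: ('a::euclidean_space)^'i::finite)"
  unfolding norm_sq_vec wn_def
proof (intro sum_mono)
  fix l
  have "p l \<le> 1" by (rule p_le1[OF p sp])
  then show "(norm (v $ l))\<^sup>2 \<le> (norm (v $ l))\<^sup>2 / p l"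
    using p[of l] by (simp add: le_divide_eq mult_left_le)
qed

lemma wn_le:
  assumes p: "\<And>l. p l > 0"
  shows "wn p (v :: ('a::euclidean_space)^'i::finite) \<le> (\<Sum>l\<in>UNIV. 1 / p l) * (norm v)\<^sup>2"
  unfolding wn_def sum_distrib_right
proof (intro sum_mono)
  fix l :: 'i
  have "(norm (v $ l))\<^sup>2 \<le> (norm v)\<^sup>2"
    unfolding norm_sq_vec[of v] by (rule member_le_sum[where f="\<lambda>l. (norm (v $ l))\<^sup>2"]) auto
  then show "(norm (v $ l))\<^sup>2 / p l \<le> 1 / p l * (norm v)\<^sup>2"
    using p[of l] by (simp add: divide_right_mono)
qed

lemma wn_add:
  assumes p: "\<And>l. p l > 0"
  shows "wn p (a + b :: ('a::euclidean_space)^'i::finite) \<le> 2 * wn p a + 2 * wn p b"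
  unfolding wn_def sum_distrib_left sum.distrib[symmetric]
proof (intro sum_mono)
  fix l
  have "(norm (a $ l + b $ l))\<^sup>2 \<le> (norm (a $ l) + norm (b $ l))\<^sup>2"
    by (intro power_mono norm_triangle_ineq) auto
  also have "\<dots> \<le> 2 * (norm (a $ l))\<^sup>2 + 2 * (norm (b $ l))\<^sup>2"
    by (smt (verit) sum_squares_bound zero_le_power2 power2_sum)
  finally have "(norm ((a + b) $ l))\<^sup>2 \<le> 2 * (norm (a $ l))\<^sup>2 + 2 * (norm (b $ l))\<^sup>2" by simp
  then show "(norm ((a + b) $ l))\<^sup>2 / p l \<le> 2 * ((norm (a $ l))\<^sup>2 / p l) + 2 * ((norm (b $ l))\<^sup>2 / p l)"
    using p[of l] by (simp add: divide_right_mono add_divide_distrib[symmetric])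
qed

lemma wn_minus: "wn p (a - b) = wn p (b - a)"
  unfolding wn_def by (simp add: norm_minus_commute)

lemma wn_tendsto:
  assumes "y \<longlonglongrightarrow> u" and p: "\<And>l. p l > 0"
  shows "(\<lambda>k. wn p (y k :: ('a::euclidean_space)^'i::finite)) \<longlonglongrightarrow> wn p u"
proof -
  have pn: "p l \<noteq> 0" for l using p[of l] by simp
  show ?thesis unfolding wn_def by (intro tendsto_intros tendsto_vec_nth assms pn)
qed


lemma closed_prod_space:
  assumes "\<And>l. subspace (V l)"
  shows "closed (prod_space (V :: 'i::finite \<Rightarrow> ('a::euclidean_space) set))"
proof -
  have "prod_space V = (\<Inter>l. (\<lambda>z. z $ l) -` V l)" by (auto simp: prod_space_def)
  moreover have "closed ((\<lambda>z::'a^'i. z $ l) -` V l)" for l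
    by (intro continuous_closed_vimage closed_subspace assms) (intro isCont_vec_nth continuous_ident)
  ultimately show ?thesis by auto
qed

lemma det_conv:
  fixes x :: "nat \<Rightarrow> ('a::euclidean_space)^'i::finite" and Y :: "('a^'i) set"
  assumes fne: "firmly_nonexpansive_on Y S" and Yc: "closed Y" and xY: "\<And>k. x k \<in> Y"
    and DF: "D \<subseteq> fixset Y S" and dense: "\<And>u e. u \<in> fixset Y S \<Longrightarrow> e > 0 \<Longrightarrow> \<exists>d\<in>D. dist u d < e"
    and Dne: "D \<noteq> {}" and conv: "\<And>d. d \<in> D \<Longrightarrow> convergent (\<lambda>k. wn p (x k - d))"
    and res: "(\<lambda>k. S (x k) - x k) \<longlonglongrightarrow> 0"
    and p: "\<And>l. p l > 0" and sp: "(\<Sum>l\<in>UNIV. p l) = 1"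
  shows "\<exists>u\<in>fixset Y S. x \<longlonglongrightarrow> u"
proof -
  obtain d0 where d0: "d0 \<in> D" using Dne by blast
  obtain K where K: "K > 0" "\<And>k. norm (wn p (x k - d0)) \<le> K"
    using convergent_imp_Bseq[OF conv[OF d0]] unfolding Bseq_def by blast
  have "norm (x k) \<le> norm d0 + sqrt K" for k
  proof -
    have "(norm (x k - d0))\<^sup>2 \<le> K" using wn_ge[OF p sp, of "x k - d0"] K(2)[of k] by simp
    then have "norm (x k - d0) \<le> sqrt K" using real_le_rsqrt by blast
    moreover have "norm (x k) \<le> norm d0 + norm (x k - d0)" using norm_triangle_ineq[of d0 "x k - d0"] by simp
    ultimately show ?thesis by linarith
  qed
  then have "bounded (range x)" unfolding bounded_iff by blast
  then obtain u r where r: "strict_mono r" and xr: "(x \<circ> r) \<longlonglongrightarrow> u"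
    using bounded_imp_convergent_subsequence by blast
  have uY: "u \<in> Y" using closed_sequentially[OF Yc _ xr] xY by simp
  have Su: "S u = u"
  proof -
    have "(\<lambda>k. S (x (r k)) - S u) \<longlonglongrightarrow> 0"
    proof (rule Lim_null_comparison)
      show "\<forall>\<^sub>F k in sequentially. norm (S (x (r k)) - S u) \<le> norm (x (r k) - u)"
        using fne_lip[OF fne xY uY] by simp
      show "(\<lambda>k. norm (x (r k) - u)) \<longlonglongrightarrow> 0"
        using xr by (simp add: o_def tendsto_norm_zero LIM_zero)
    qed
    then have A: "(\<lambda>k. S (x (r k))) \<longlonglongrightarrow> S u" by (simp add: LIM_zero_iff)
    have "((\<lambda>k. S (x k) - x k) \<circ> r) \<longlonglongrightarrow> 0" by (rule LIMSEQ_subseq_LIMSEQ[OF res r])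
    then have "(\<lambda>k. (S (x (r k)) - x (r k)) + x (r k)) \<longlonglongrightarrow> 0 + u"
      using xr by (intro tendsto_add) (auto simp: o_def)
    then have B: "(\<lambda>k. S (x (r k))) \<longlonglongrightarrow> u" by simp
    show ?thesis using LIMSEQ_unique[OF A B] .
  qed
  have uF: "u \<in> fixset Y S" using uY Su by (simp add: fixset_def)
  have lim_d: "(\<lambda>k. wn p (x k - d)) \<longlonglongrightarrow> wn p (u - d)" if d: "d \<in> D" for d
  proof -
    obtain L where L: "(\<lambda>k. wn p (x k - d)) \<longlonglongrightarrow> L" using conv[OF d] by (auto simp: convergent_def)
    have "((\<lambda>k. wn p (x k - d)) \<circ> r) \<longlonglongrightarrow> L" by (rule LIMSEQ_subseq_LIMSEQ[OF L r])
    moreover have "((\<lambda>k. wn p (x k - d)) \<circ> r) \<longlonglongrightarrow> wn p (u - d)"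
      unfolding o_def by (intro wn_tendsto p tendsto_diff tendsto_const) (use xr in \<open>simp add: o_def\<close>)
    ultimately have "L = wn p (u - d)" by (rule LIMSEQ_unique)
    then show ?thesis using L by simp
  qed
  define C where "C = (\<Sum>l\<in>UNIV. 1 / p l)"
  have C0: "C \<ge> 0" unfolding C_def using p by (intro sum_nonneg) (auto intro: less_imp_le)
  have "x \<longlonglongrightarrow> u"
  proof (rule LIMSEQ_I)
    fix e :: real assume e: "e > 0"
    define \<delta> where "\<delta> = min 1 (e\<^sup>2 / (8 * (C + 1)))"
    have \<delta>0: "\<delta> > 0" unfolding \<delta>_def using e C0 by simp
    obtain d where d: "d \<in> D" "dist u d < \<delta>" using dense[OF uF \<delta>0] by blast
    have "wn p (u - d) \<le> C * (norm (u - d))\<^sup>2" unfolding C_def by (rule wn_le[OF p])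
    also have "\<dots> \<le> C * \<delta>\<^sup>2"
      using d(2) C0 by (intro mult_left_mono power_mono) (auto simp: dist_norm)
    also have "\<dots> \<le> C * \<delta>"
      using \<delta>0 C0 by (intro mult_left_mono) (auto simp: \<delta>_def power2_eq_square mult_le_cancel_right1 min_def)
    also have "\<dots> \<le> (C + 1) * (e\<^sup>2 / (8 * (C + 1)))"
      using C0 \<delta>0 by (intro mult_mono) (auto simp: \<delta>_def)
    also have "\<dots> = e\<^sup>2 / 8" using C0 by (simp add: field_simps)
    finally have wud: "wn p (u - d) \<le> e\<^sup>2 / 8" .
    have "\<forall>\<^sub>F k in sequentially. wn p (x k - d) < wn p (u - d) + e\<^sup>2 / 8"
      using lim_d[OF d(1)] e by (intro order_tendstoD) auto
    then obtain N where N: "\<And>k. k \<ge> N \<Longrightarrow> wn p (x k - d) < wn p (u - d) + e\<^sup>2 / 8"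
      unfolding eventually_sequentially by blast
    show "\<exists>no. \<forall>n\<ge>no. norm (x n - u) < e"
    proof (intro exI allI impI)
      fix n assume n: "n \<ge> N"
      have "(norm (x n - u))\<^sup>2 \<le> wn p (x n - u)" by (rule wn_ge[OF p sp])
      also have "\<dots> = wn p ((x n - d) + (d - u))" by simp
      also have "\<dots> \<le> 2 * wn p (x n - d) + 2 * wn p (d - u)" by (rule wn_add[OF p])
      also have "wn p (d - u) = wn p (u - d)" by (rule wn_minus)
      also have "2 * wn p (x n - d) + 2 * wn p (u - d) < e\<^sup>2"
      proof -
        have "e\<^sup>2 > 0" using e by simp
        then show ?thesis using N[OF n] wud by linarith
      qed
      finally have "(norm (x n - u))\<^sup>2 < e\<^sup>2" .
      then show "norm (x n - u) < e" using e by (simp add: power_less_imp_less_base)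
    qed
  qed
  then show ?thesis using uF by blast
qed




primrec zt :: "('a^'i \<Rightarrow> 'a^'i) \<Rightarrow> 'a^'i \<Rightarrow> 'i::finite list \<Rightarrow> 'a^'i" where
  "zt S z0 [] = z0" | "zt S z0 (l # s) = S_hat S l (zt S z0 s)"

primrec hh :: "('a^'i \<Rightarrow> 'a^'i) \<Rightarrow> ('a::real_normed_vector)^'i \<Rightarrow> 'i::finite list \<Rightarrow> real" where
  "hh S z0 [] = 0" | "hh S z0 (l # s) = hh S z0 s + (norm (S (zt S z0 s) - zt S z0 s))\<^sup>2"

lemma hh_nonneg: "hh S z0 s \<ge> 0"
  by (induction s) auto

lemma S_hat_in:
  assumes "z \<in> prod_space V" "S z \<in> prod_space V"
  shows "S_hat S l z \<in> prod_space V"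
  using assms by (auto simp: prod_space_def S_hat_nth)

lemma zt_in:
  assumes z0: "z0 \<in> prod_space V" and Sm: "\<And>z. z \<in> prod_space V \<Longrightarrow> S z \<in> prod_space V"
  shows "zt S z0 s \<in> prod_space V"
  by (induction s) (auto intro: S_hat_in Sm z0)

context rbc
begin

lemma rbc_iter_zt: "rbc_iter S xi z0 k w = zt S z0 (word k w)"
  by (induction k) auto

lemma word_measurable: "word k \<in> measurable M (count_space UNIV)"
proof (rule measurableI)
  fix A :: "'i list set"
  have "word k -` A \<inter> space M = {w\<in>space M. word k w \<in> A}" by auto
  then show "word k -` A \<inter> space M \<in> sets M" using sets_word[of "\<lambda>s. s \<in> A" k] by simp
qed simp

lemma rbc_iter_measurable: "(\<lambda>w. rbc_iter S xi z0 k w) \<in> borel_measurable M"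
proof -
  have "(\<lambda>w. zt S z0 (word k w)) \<in> borel_measurable M"
    by (rule measurable_compose[OF word_measurable]) simp
  then show ?thesis by (simp add: rbc_iter_zt)
qed

end


lemma super_f:
  fixes p :: "'i::finite \<Rightarrow> real"
  assumes p: "\<And>l. p l > 0" and sp: "(\<Sum>l\<in>UNIV. p l) = 1"
    and fne: "firmly_nonexpansive_on (prod_space V) S"
    and z0: "z0 \<in> prod_space V" and Sm: "\<And>z. z \<in> prod_space V \<Longrightarrow> S z \<in> prod_space V"
    and d: "d \<in> fixset (prod_space V) S"
  shows "(\<Sum>l\<in>UNIV. p l * wn p (zt S z0 (l # s) - d)) \<le> wn p (zt S z0 s - d) - (norm (S (zt S z0 s) - zt S z0 s))\<^sup>2"
proof -
  have "(\<Sum>l\<in>UNIV. p l * wn p (zt S z0 (l # s) - d)) = wn p (zt S z0 s - d) + (norm (S (zt S z0 s) - d))\<^sup>2 - (norm (zt S z0 s - d))\<^sup>2"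
    using wn_expect[OF p sp, of S "zt S z0 s" d] by simp
  also have "\<dots> \<le> wn p (zt S z0 s - d) - (norm (S (zt S z0 s) - zt S z0 s))\<^sup>2"
  proof -
    have zin: "zt S z0 s \<in> prod_space V" by (rule zt_in) (use z0 Sm in auto)
    have dY: "d \<in> prod_space V" and Sd: "S d = d" using d by (auto simp: fixset_def)
    show ?thesis using fne_ineq[OF fne zin dY Sd] by simp
  qed
  finally show ?thesis .
qed

theorem mainTheorem3:
  fixes V :: "'i::finite \<Rightarrow> ('a::euclidean_space) set"
    and S :: "'a^'i \<Rightarrow> 'a^'i"
    and M :: "'m measure"
    and xi :: "nat \<Rightarrow> 'm \<Rightarrow> 'i"
    and z0 :: "'a^'i"
  assumes subsp: "\<And>l. subspace (V l)"
    and S_maps: "\<And>z. z \<in> prod_space V \<Longrightarrow> S z \<in> prod_space V"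
    and fne: "firmly_nonexpansive_on (prod_space V) S"
    and P: "prob_space M"
    and rv: "\<And>k. k \<ge> 1 \<Longrightarrow> xi k \<in> measurable M (count_space UNIV)"
    and indep: "prob_space.indep_vars M (\<lambda>_. count_space UNIV) xi {1..}"
    and ident: "\<And>k. k \<ge> 1 \<Longrightarrow> distr M (count_space UNIV) (xi k) = distr M (count_space UNIV) (xi 1)"
    and pos: "\<And>l. measure M {w \<in> space M. xi 1 w = l} > 0"
    and fixne: "fixset (prod_space V) S \<noteq> {}"
    and z0: "z0 \<in> prod_space V"
  shows "\<exists>Z. Z \<in> borel_measurable M \<and> (\<forall>w\<in>space M. Z w \<in> fixset (prod_space V) S) \<and>
           (AE w in M. (\<lambda>k. rbc_iter S xi z0 k w) \<longlonglongrightarrow> Z w)"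
proof -
  have ax: "rbc_axioms M xi"
  proof (rule rbc_axioms.intro)
    show "\<And>k. 1 \<le> k \<Longrightarrow> xi k \<in> M \<rightarrow>\<^sub>M count_space UNIV" by (rule rv)
    show "prob_space.indep_vars M (\<lambda>_. count_space UNIV) xi {1..}" by (rule indep)
    show "\<And>k. 1 \<le> k \<Longrightarrow> distr M (count_space UNIV) (xi k) = distr M (count_space UNIV) (xi 1)" by (rule ident)
  qed
  interpret R: rbc M xi by (rule rbc.intro[OF P ax])
  let ?Y = "prod_space V"
  let ?F = "fixset ?Y S"
  let ?p = "R.p"
  have p: "\<And>l. ?p l > 0" using pos by (simp add: R.p_def)
  have sp: "(\<Sum>l\<in>UNIV. ?p l) = 1" by (rule R.sum_p)
  obtain D where D: "countable D" "D \<subseteq> ?F" "\<And>u e. u \<in> ?F \<Longrightarrow> e > 0 \<Longrightarrow> \<exists>d\<in>D. dist u d < e"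
    using dense_subset[of ?F] by blast
  obtain u0 where u0: "u0 \<in> ?F" using fixne by blast
  have Dne: "D \<noteq> {}" using D(3)[OF u0, of 1] by auto
  let ?x = "\<lambda>w k. zt S z0 (R.word k w)"
  have AEd: "AE w in M. convergent (\<lambda>k. wn ?p (?x w k - d)) \<and>
      convergent (\<lambda>k. wn ?p (?x w k - d) + hh S z0 (R.word k w))" if d: "d \<in> D" for d
  proof -
    have dF: "d \<in> ?F" using d D(2) by blast
    have sf: "(\<Sum>l\<in>UNIV. ?p l * wn ?p (zt S z0 (l # s) - d)) \<le> wn ?p (zt S z0 s - d) - (norm (S (zt S z0 s) - zt S z0 s))\<^sup>2" for s
      by (rule super_f[OF p sp fne z0 S_maps dF])
    have c1: "AE w in M. convergent (\<lambda>k. wn ?p (zt S z0 (R.word k w) - d))"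
    proof (rule R.AE_convergent[of "\<lambda>s. wn ?p (zt S z0 s - d)"])
      show "\<And>s. 0 \<le> wn ?p (zt S z0 s - d)" by (rule wn_nonneg) (rule p)
      show "(\<Sum>l\<in>UNIV. ?p l * wn ?p (zt S z0 (l # s) - d)) \<le> wn ?p (zt S z0 s - d)" for s
      proof -
        have "(norm (S (zt S z0 s) - zt S z0 s))\<^sup>2 \<ge> 0" by simp
        then show ?thesis using sf[of s] by linarith
      qed
    qed
    have c2: "AE w in M. convergent (\<lambda>k. wn ?p (zt S z0 (R.word k w) - d) + hh S z0 (R.word k w))"
    proof (rule R.AE_convergent[of "\<lambda>s. wn ?p (zt S z0 s - d) + hh S z0 s"])
      show "\<And>s. 0 \<le> wn ?p (zt S z0 s - d) + hh S z0 s"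
      proof -
        fix s
        have "0 \<le> wn ?p (zt S z0 s - d)" by (rule wn_nonneg) (rule p)
        moreover have "0 \<le> hh S z0 s" by (rule hh_nonneg)
        ultimately show "0 \<le> wn ?p (zt S z0 s - d) + hh S z0 s" by simp
      qed
      fix s
      have "(\<Sum>l\<in>UNIV. ?p l * (wn ?p (zt S z0 (l # s) - d) + hh S z0 (l # s)))
          = (\<Sum>l\<in>UNIV. ?p l * wn ?p (zt S z0 (l # s) - d)) + (\<Sum>l\<in>UNIV. ?p l) * (hh S z0 s + (norm (S (zt S z0 s) - zt S z0 s))\<^sup>2)"
        by (simp add: distrib_left sum.distrib sum_distrib_right)
      also have "\<dots> \<le> wn ?p (zt S z0 s - d) + hh S z0 s"
        using sf[of s] sp by simp
      finally show "(\<Sum>l\<in>UNIV. ?p l * (wn ?p (zt S z0 (l # s) - d) + hh S z0 (l # s))) \<le> wn ?p (zt S z0 s - d) + hh S z0 s" .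
    qed
    from c1 c2 show ?thesis by eventually_elim simp
  qed
  have AEall: "AE w in M. \<forall>d\<in>D. convergent (\<lambda>k. wn ?p (?x w k - d)) \<and>
      convergent (\<lambda>k. wn ?p (?x w k - d) + hh S z0 (R.word k w))"
    by (subst AE_ball_countable[OF D(1)]) (use AEd in blast)
  have AEconv: "AE w in M. \<exists>u\<in>?F. (\<lambda>k. rbc_iter S xi z0 k w) \<longlonglongrightarrow> u"
    using AEall
  proof eventually_elim
    case (elim w)
    obtain d0 where d0: "d0 \<in> D" using Dne by blast
    have "convergent (\<lambda>k. (wn ?p (?x w k - d0) + hh S z0 (R.word k w)) - wn ?p (?x w k - d0))"
      using elim d0 by (intro convergent_diff) auto
    then have "convergent (\<lambda>k. hh S z0 (R.word k w))" by simp
    then obtain L where L: "(\<lambda>k. hh S z0 (R.word k w)) \<longlonglongrightarrow> L" by (auto simp: convergent_def)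
    have "(\<lambda>k. hh S z0 (R.word (Suc k) w) - hh S z0 (R.word k w)) \<longlonglongrightarrow> L - L"
      by (rule tendsto_diff[OF LIMSEQ_Suc[OF L] L])
    then have "(\<lambda>k. (norm (S (?x w k) - ?x w k))\<^sup>2) \<longlonglongrightarrow> 0" by simp
    then have "(\<lambda>k. sqrt ((norm (S (?x w k) - ?x w k))\<^sup>2)) \<longlonglongrightarrow> sqrt 0" by (rule tendsto_real_sqrt)
    then have "(\<lambda>k. norm (S (?x w k) - ?x w k)) \<longlonglongrightarrow> 0" by simp
    then have res: "(\<lambda>k. S (?x w k) - ?x w k) \<longlonglongrightarrow> 0" by (simp add: tendsto_norm_zero_iff)
    have "\<exists>u\<in>?F. (?x w) \<longlonglongrightarrow> u"
    proof (rule det_conv[OF fne closed_prod_space[OF subsp]])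
      show "\<And>k. ?x w k \<in> ?Y" by (rule zt_in) (use z0 S_maps in auto)
      show "D \<subseteq> ?F" by (rule D(2))
      show "\<And>u e. u \<in> ?F \<Longrightarrow> e > 0 \<Longrightarrow> \<exists>d\<in>D. dist u d < e" by (rule D(3))
      show "D \<noteq> {}" by (rule Dne)
      show "\<And>d. d \<in> D \<Longrightarrow> convergent (\<lambda>k. wn ?p (?x w k - d))" using elim by blast
      show "(\<lambda>k. S (?x w k) - ?x w k) \<longlonglongrightarrow> 0" by (rule res)
      show "\<And>l. ?p l > 0" by (rule p)
      show "(\<Sum>l\<in>UNIV. ?p l) = 1" by (rule sp)
    qed
    then show ?case by (simp add: R.rbc_iter_zt)
  qed
  from AEconv obtain N where N: "{w \<in> space M. \<not> (\<exists>u\<in>?F. (\<lambda>k. rbc_iter S xi z0 k w) \<longlonglongrightarrow> u)} \<subseteq> N"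
    "emeasure M N = 0" "N \<in> sets M"
    by (rule AE_E)
  define Z where "Z w = (if w \<in> space M - N then lim (\<lambda>k. rbc_iter S xi z0 k w) else u0)" for w
  have "Z \<in> borel_measurable M"
    unfolding Z_def
  proof (rule measurable_If_set)
    show "(\<lambda>w. lim (\<lambda>k. rbc_iter S xi z0 k w)) \<in> borel_measurable M"
      by (intro borel_measurable_lim_metric R.rbc_iter_measurable)
    show "(\<lambda>w. u0) \<in> borel_measurable M" by simp
    show "(space M - N) \<inter> space M \<in> sets M" using N(3) by auto
  qed
  moreover have good: "\<exists>u\<in>?F. (\<lambda>k. rbc_iter S xi z0 k w) \<longlonglongrightarrow> u \<and> Z w = u" if w: "w \<in> space M - N" for w
  proof -
    from w N(1) obtain u where u: "u \<in> ?F" "(\<lambda>k. rbc_iter S xi z0 k w) \<longlonglongrightarrow> u" by blast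
    then have "Z w = u" using w by (simp add: Z_def limI)
    then show ?thesis using u by blast
  qed
  moreover have "\<forall>w\<in>space M. Z w \<in> ?F"
  proof
    fix w assume w: "w \<in> space M"
    show "Z w \<in> ?F"
    proof (cases "w \<in> N")
      case True then show ?thesis using u0 by (simp add: Z_def)
    next
      case False then show ?thesis using good[of w] w by auto
    qed
  qed
  moreover have "AE w in M. (\<lambda>k. rbc_iter S xi z0 k w) \<longlonglongrightarrow> Z w"
  proof -
    have "N \<in> null_sets M" using N by (simp add: null_sets_def)
    then have "AE w in M. w \<notin> N" by (rule AE_not_in)
    then show ?thesis
    proof (rule AE_mp[OF _ AE_I2], intro impI)
      fix w assume "w \<in> space M" "w \<notin> N"
      then show "(\<lambda>k. rbc_iter S xi z0 k w) \<longlonglongrightarrow> Z w" using good[of w] by auto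
    qed
  qed
  ultimately show ?thesis by (intro exI[of _ Z] conjI)
qed


end
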